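(* Consider instances with divisible items. There is no (possibly randomized) mechanism $M$ that is individually rational, truthful in expectation and budget feasible in expectation, together with constants $\alpha>1-1/e$ and $\theta_0>0$, such that on every instance with $c_{\max}/B\le\theta_0$ the expected utility of $M$ is at least $\alpha U^\star$.
   Context: A buyer with budget $B>0$ faces a finite set $S$ of sellers; seller $i$ owns one item giving the buyer utility $u_i>0$ and has a private cost $c_i\ge0$; $c_{\max}=\max_i c_i$. Items are divisible: buying a fraction $x_i\in[0,1]$ costs seller $i$ the amount $x_ic_i$ and gives the buyer utility $x_iu_i$. $U^\star=\max\{\sum_iu_i\alpha_i:\alpha\in[0,1]^S,\ \sum_ic_i\alpha_i\le B\}$. A randomized mechanism maps reported costs to random fractions $x_i\in[0,1]$ and random payments $p_i\ge0$; its utility is $\sum_iu_ix_i$. It is truthful in expectation if for every seller $i$ and all reports, $\mathbb E[p_i-c_ix_i]$ is maximized (over $i$'s report, the others' reports fixed) by reporting the true cost $c_i$; individually rational in expectation if $\mathbb E[p_i]\ge c_i\mathbb E[x_i]$ under truthful reports; budget feasible in expectation if $\mathbb E[\sum_ip_i]\le B$. *)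

theory Defs
  imports "HOL-Probability.Probability"
begin

text \<open>A randomized mechanism
maps (S, u, B, reported cost profile) to a probability distribution over outcomes (x, p):
x = fractions bought, p = payments.\<close>

type_synonym outcome = "(nat \<Rightarrow> real) \<times> (nat \<Rightarrow> real)"
type_synonym mechanism = "nat set \<Rightarrow> (nat \<Rightarrow> real) \<Rightarrow> real \<Rightarrow> (nat \<Rightarrow> real) \<Rightarrow> outcome pmf"

definition valid_instance :: "nat set \<Rightarrow> (nat \<Rightarrow> real) \<Rightarrow> real \<Rightarrow> bool" where
  "valid_instance S u B \<longleftrightarrow> finite S \<and> S \<noteq> {} \<and> B > 0 \<and> (\<forall>i\<in>S. u i > 0)"

definition valid_costs :: "nat set \<Rightarrow> (nat \<Rightarrow> real) \<Rightarrow> bool" where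
  "valid_costs S c \<longleftrightarrow> (\<forall>i\<in>S. c i \<ge> 0)"

definition well_formed :: "mechanism \<Rightarrow> bool" where
  "well_formed M \<longleftrightarrow> (\<forall>S u B b. valid_instance S u B \<longrightarrow> valid_costs S b \<longrightarrow>
     (\<forall>\<omega>\<in>set_pmf (M S u B b). \<forall>i\<in>S. 0 \<le> fst \<omega> i \<and> fst \<omega> i \<le> 1 \<and> snd \<omega> i \<ge> 0))"

definition exp_x :: "outcome pmf \<Rightarrow> nat \<Rightarrow> real" where
  "exp_x D i = measure_pmf.expectation D (\<lambda>\<omega>. fst \<omega> i)"

definition exp_p :: "outcome pmf \<Rightarrow> nat \<Rightarrow> real" where
  "exp_p D i = measure_pmf.expectation D (\<lambda>\<omega>. snd \<omega> i)"

text \<open>Budget feasible in expectation (stated via the nonnegative integral, so that it also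
 entails that expected payments are finite).\<close>
definition budget_feasible_exp :: "mechanism \<Rightarrow> bool" where
  "budget_feasible_exp M \<longleftrightarrow> (\<forall>S u B b. valid_instance S u B \<longrightarrow> valid_costs S b \<longrightarrow>
     (\<integral>\<^sup>+ \<omega>. ennreal (\<Sum>i\<in>S. snd \<omega> i) \<partial>measure_pmf (M S u B b)) \<le> ennreal B)"

definition indiv_rational_exp :: "mechanism \<Rightarrow> bool" where
  "indiv_rational_exp M \<longleftrightarrow> (\<forall>S u B c. valid_instance S u B \<longrightarrow> valid_costs S c \<longrightarrow>
     (\<forall>i\<in>S. exp_p (M S u B c) i \<ge> c i * exp_x (M S u B c) i))"

text \<open>Truthful in expectation: for every profile b of reports in which seller i reports
 the true cost b i, no deviation c' of seller i increases its expected profit.\<close>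
definition truthful_exp :: "mechanism \<Rightarrow> bool" where
  "truthful_exp M \<longleftrightarrow> (\<forall>S u B b. valid_instance S u B \<longrightarrow> valid_costs S b \<longrightarrow>
     (\<forall>i\<in>S. \<forall>c'. c' \<ge> 0 \<longrightarrow>
        measure_pmf.expectation (M S u B b) (\<lambda>\<omega>. snd \<omega> i - b i * fst \<omega> i)
        \<ge> measure_pmf.expectation (M S u B (b(i := c'))) (\<lambda>\<omega>. snd \<omega> i - b i * fst \<omega> i)))"

definition opt_frac :: "nat set \<Rightarrow> (nat \<Rightarrow> real) \<Rightarrow> real \<Rightarrow> (nat \<Rightarrow> real) \<Rightarrow> real" where
  "opt_frac S u B c = Sup {\<Sum>i\<in>S. u i * a i | a. (\<forall>i\<in>S. 0 \<le> a i \<and> a i \<le> 1) \<and> (\<Sum>i\<in>S. c i * a i) \<le> B}"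

definition exp_utility :: "mechanism \<Rightarrow> nat set \<Rightarrow> (nat \<Rightarrow> real) \<Rightarrow> real \<Rightarrow> (nat \<Rightarrow> real) \<Rightarrow> real" where
  "exp_utility M S u B c = measure_pmf.expectation (M S u B c) (\<lambda>\<omega>. \<Sum>i\<in>S. u i * fst \<omega> i)"

end

theory Submission
  imports Defs
begin

lemma wf_x:
  assumes "well_formed M" "valid_instance S u B" "valid_costs S c" "i \<in> S"
  shows "0 \<le> exp_x (M S u B c) i" "exp_x (M S u B c) i \<le> 1"
    "integrable (measure_pmf (M S u B c)) (\<lambda>\<omega>. fst \<omega> i)"
proof -
  have ae: "AE \<omega> in measure_pmf (M S u B c). 0 \<le> fst \<omega> i \<and> fst \<omega> i \<le> 1 \<and> snd \<omega> i \<ge> 0"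
    using assms unfolding well_formed_def by (intro AE_pmfI) blast
  show int: "integrable (measure_pmf (M S u B c)) (\<lambda>\<omega>. fst \<omega> i)"
    by (rule measure_pmf.integrable_const_bound[where B=1]) (use ae in auto)
  show "0 \<le> exp_x (M S u B c) i" unfolding exp_x_def
    by (rule integral_nonneg_AE) (use ae in auto)
  have "exp_x (M S u B c) i \<le> measure_pmf.expectation (M S u B c) (\<lambda>_. 1)" unfolding exp_x_def
    by (rule integral_mono_AE) (use ae int in auto)
  then show "exp_x (M S u B c) i \<le> 1" by simp
qed

lemma wf_p:
  assumes "well_formed M" "budget_feasible_exp M" "valid_instance S u B" "valid_costs S c" "i \<in> S"
  shows "0 \<le> exp_p (M S u B c) i"
    "integrable (measure_pmf (M S u B c)) (\<lambda>\<omega>. snd \<omega> i)"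
    "(\<Sum>j\<in>S. exp_p (M S u B c) j) \<le> B"
proof -
  let ?D = "measure_pmf (M S u B c)"
  have ae: "AE \<omega> in ?D. \<forall>j\<in>S. 0 \<le> fst \<omega> j \<and> fst \<omega> j \<le> 1 \<and> snd \<omega> j \<ge> 0"
    using assms unfolding well_formed_def by (intro AE_pmfI) blast
  have fin: "finite S" using assms(3) unfolding valid_instance_def by auto
  have bud: "(\<integral>\<^sup>+ \<omega>. ennreal (\<Sum>j\<in>S. snd \<omega> j) \<partial>?D) \<le> ennreal B"
    using assms unfolding budget_feasible_exp_def by blast
  have intj: "integrable ?D (\<lambda>\<omega>. snd \<omega> j)" if "j \<in> S" for j
  proof -
    have "(\<integral>\<^sup>+ \<omega>. ennreal (norm (snd \<omega> j)) \<partial>?D) \<le> (\<integral>\<^sup>+ \<omega>. ennreal (\<Sum>j\<in>S. snd \<omega> j) \<partial>?D)"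
    proof (rule nn_integral_mono_AE)
      show "AE \<omega> in ?D. ennreal (norm (snd \<omega> j)) \<le> ennreal (\<Sum>j\<in>S. snd \<omega> j)"
        using ae
      proof eventually_elim
        case (elim \<omega>)
        then have "snd \<omega> j \<le> (\<Sum>j\<in>S. snd \<omega> j)"
          using that fin by (intro member_le_sum) auto
        then show ?case using elim that by (auto intro: ennreal_leI)
      qed
    qed
    also have "\<dots> < \<infinity>" using bud by (simp add: le_less_trans)
    finally show ?thesis by (simp add: integrable_iff_bounded)
  qed
  show "integrable ?D (\<lambda>\<omega>. snd \<omega> i)" using intj assms(5) .
  show "0 \<le> exp_p (M S u B c) i" unfolding exp_p_def
    by (rule integral_nonneg_AE) (use ae assms(5) in auto)
  have "(\<Sum>j\<in>S. exp_p (M S u B c) j) = measure_pmf.expectation (M S u B c) (\<lambda>\<omega>. \<Sum>j\<in>S. snd \<omega> j)"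
    unfolding exp_p_def using Bochner_Integration.integral_sum[of S ?D "\<lambda>j \<omega>. snd \<omega> j", OF intj] by simp
  also have "\<dots> = enn2real (\<integral>\<^sup>+ \<omega>. ennreal (\<Sum>j\<in>S. snd \<omega> j) \<partial>?D)"
    by (rule integral_eq_nn_integral) (use ae in \<open>auto intro: sum_nonneg\<close>)
  also have "\<dots> \<le> B"
    using bud assms(3) unfolding valid_instance_def
    by (metis enn2real_ennreal enn2real_mono ennreal_neq_top less_eq_real_def linorder_not_le top.not_eq_extremum)
  finally show "(\<Sum>j\<in>S. exp_p (M S u B c) j) \<le> B" .
qed

lemma exp_lin:
  assumes "well_formed M" "budget_feasible_exp M" "valid_instance S u B" "valid_costs S c" "i \<in> S"
  shows "measure_pmf.expectation (M S u B c) (\<lambda>\<omega>. snd \<omega> i - a * fst \<omega> i)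
       = exp_p (M S u B c) i - a * exp_x (M S u B c) i"
  unfolding exp_p_def exp_x_def
  using wf_x(3)[OF assms(1,3,4,5)] wf_p(2)[OF assms] by simp

lemma truth:
  assumes "well_formed M" "budget_feasible_exp M" "truthful_exp M"
    "valid_instance S u B" "valid_costs S b" "i \<in> S" "t \<ge> 0"
  shows "exp_p (M S u B b) i - b i * exp_x (M S u B b) i \<ge>
         exp_p (M S u B (b(i:=t))) i - b i * exp_x (M S u B (b(i:=t))) i"
proof -
  have v: "valid_costs S (b(i:=t))" using assms(5,7) unfolding valid_costs_def by auto
  show ?thesis
  proof -
    have "measure_pmf.expectation (M S u B b) (\<lambda>\<omega>. snd \<omega> i - b i * fst \<omega> i)
        \<ge> measure_pmf.expectation (M S u B (b(i := t))) (\<lambda>\<omega>. snd \<omega> i - b i * fst \<omega> i)"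
      using assms(3) assms(4-7) unfolding truthful_exp_def by blast
    then show ?thesis
      unfolding exp_lin[OF assms(1,2,4,5,6)] exp_lin[OF assms(1,2,4) v assms(6)] .
  qed
qed

lemma util_eq:
  assumes "well_formed M" "valid_instance S u B" "valid_costs S c"
  shows "exp_utility M S u B c = (\<Sum>i\<in>S. u i * exp_x (M S u B c) i)"
  unfolding exp_utility_def exp_x_def
  using Bochner_Integration.integral_sum[of S "measure_pmf (M S u B c)" "\<lambda>i \<omega>. u i * fst \<omega> i"]
    wf_x(3)[OF assms] by simp


lemma myerson_aux:
  fixes D s x p :: "nat \<Rightarrow> real"
  assumes D: "\<And>k. D k \<ge> 0"
    and ic: "\<And>k. k < m \<Longrightarrow> p k - s k * x k \<ge> p (Suc k) - s k * x (Suc k)"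
  shows "r \<le> m \<Longrightarrow> (\<Sum>k\<le>r. D k * (p k - s k * x k)) \<ge>
     (\<Sum>j\<le>r. D j) * (p r - s r * x r) + (\<Sum>k<r. (\<Sum>j\<le>k. D j) * (s (Suc k) - s k) * x (Suc k))"
proof (induction r)
  case 0 then show ?case by simp
next
  case (Suc r)
  let ?F = "\<Sum>j\<le>r. D j"
  have F0: "?F \<ge> 0" using D by (simp add: sum_nonneg)
  have "p r - s r * x r \<ge> (p (Suc r) - s (Suc r) * x (Suc r)) + (s (Suc r) - s r) * x (Suc r)"
    using ic[of r] Suc.prems by (simp add: algebra_simps)
  then have "?F * (p r - s r * x r) \<ge> ?F * ((p (Suc r) - s (Suc r) * x (Suc r)) + (s (Suc r) - s r) * x (Suc r))"
    using F0 by (rule mult_left_mono)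
  then show ?case using Suc by (simp add: algebra_simps)
qed

lemma myerson:
  fixes D s x p :: "nat \<Rightarrow> real"
  assumes D: "\<And>k. D k \<ge> 0"
    and ic: "\<And>k. k < m \<Longrightarrow> p k - s k * x k \<ge> p (Suc k) - s k * x (Suc k)"
    and ir: "p m - s m * x m \<ge> 0"
    and rel: "\<And>k. k < m \<Longrightarrow> D (Suc k) = s (Suc k) * D (Suc k) + (s (Suc k) - s k) * (\<Sum>j\<le>k. D j)"
    and s0: "s 0 = 0" and x0: "x 0 \<le> 1"
  shows "(\<Sum>k\<le>m. D k * p k) \<ge> (\<Sum>k\<le>m. D k * x k) - D 0"
proof -
  have A: "(\<Sum>k\<le>m. D k * (p k - s k * x k)) \<ge> (\<Sum>k<m. (\<Sum>j\<le>k. D j) * (s (Suc k) - s k) * x (Suc k))"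
  proof -
    have "(\<Sum>j\<le>m. D j) * (p m - s m * x m) \<ge> 0" using D ir by (simp add: sum_nonneg)
    then show ?thesis using myerson_aux[of D m p s x m, OF D ic] by linarith
  qed
  have B: "(\<Sum>k\<le>m. D k * p k) = (\<Sum>k\<le>m. D k * (p k - s k * x k)) + (\<Sum>k\<le>m. D k * s k * x k)"
    by (simp add: algebra_simps sum.distrib[symmetric])
  have C: "(\<Sum>k\<le>m. D k * s k * x k) = (\<Sum>k<m. D (Suc k) * s (Suc k) * x (Suc k))"
    using s0 by (simp add: sum.atMost_shift)
  have E: "(\<Sum>k\<le>m. D k * x k) = D 0 * x 0 + (\<Sum>k<m. D (Suc k) * x (Suc k))"
    by (simp add: sum.atMost_shift)
  have G: "(\<Sum>k<m. D (Suc k) * x (Suc k)) = (\<Sum>k<m. (\<Sum>j\<le>k. D j) * (s (Suc k) - s k) * x (Suc k))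
      + (\<Sum>k<m. D (Suc k) * s (Suc k) * x (Suc k))"
    unfolding sum.distrib[symmetric]
  proof (rule sum.cong[OF refl])
    fix k assume "k \<in> {..<m}"
    then have eq: "D (Suc k) = s (Suc k) * D (Suc k) + (s (Suc k) - s k) * (\<Sum>j\<le>k. D j)" using rel by auto
    show "D (Suc k) * x (Suc k) = (\<Sum>j\<le>k. D j) * (s (Suc k) - s k) * x (Suc k) + D (Suc k) * s (Suc k) * x (Suc k)"
    proof -
      have "D (Suc k) * x (Suc k) = (s (Suc k) * D (Suc k) + (s (Suc k) - s k) * (\<Sum>j\<le>k. D j)) * x (Suc k)"
        using eq by (rule arg_cong[where f="\<lambda>z. z * x (Suc k)"])
      then show ?thesis by (simp add: algebra_simps)
    qed
  qed
  have "D 0 * x 0 \<le> D 0" using D[of 0] x0 by (simp add: mult_left_le)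
  then show ?thesis using A B C E G by linarith
qed

primrec Exq :: "(nat \<Rightarrow> real) \<Rightarrow> nat \<Rightarrow> nat \<Rightarrow> ((nat \<Rightarrow> nat) \<Rightarrow> real) \<Rightarrow> real" where
  "Exq D m 0 h = h (\<lambda>_. 0)"
| "Exq D m (Suc n) h = (\<Sum>k\<le>m. D k * Exq D m n (\<lambda>\<kappa>. h (\<kappa>(n:=k))))"

lemma Ex_add: "Exq D m n (\<lambda>\<kappa>. f \<kappa> + g \<kappa>) = Exq D m n f + Exq D m n g"
  by (induction n arbitrary: f g) (simp_all add: sum.distrib distrib_left)

lemma Ex_cmult: "Exq D m n (\<lambda>\<kappa>. a * f \<kappa>) = a * Exq D m n f"
  by (induction n arbitrary: f) (simp_all add: sum_distrib_left mult.left_commute)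

lemma Ex_diff: "Exq D m n (\<lambda>\<kappa>. f \<kappa> - g \<kappa>) = Exq D m n f - Exq D m n g"
  using Ex_add[of D m n f "\<lambda>\<kappa>. - g \<kappa>"] Ex_cmult[of D m n "-1" g] by simp

lemma Ex_zero: "Exq D m n (\<lambda>\<kappa>. 0) = 0"
  by (induction n) simp_all

lemma Ex_const: "(\<Sum>k\<le>m. D k) = 1 \<Longrightarrow> Exq D m n (\<lambda>\<kappa>. a) = a"
  by (induction n) (simp_all add: sum_distrib_right[symmetric])

lemma Ex_mono: "(\<And>k. D k \<ge> 0) \<Longrightarrow> (\<And>\<kappa>. f \<kappa> \<le> g \<kappa>) \<Longrightarrow> Exq D m n f \<le> Exq D m n g"
proof (induction n arbitrary: f g)
  case 0 then show ?case by simp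
next
  case (Suc n) then show ?case by (simp add: sum_mono mult_left_mono)
qed

lemma Ex_sum: "finite A \<Longrightarrow> Exq D m n (\<lambda>\<kappa>. \<Sum>i\<in>A. f i \<kappa>) = (\<Sum>i\<in>A. Exq D m n (f i))"
  by (induction A rule: finite_induct) (simp_all add: Ex_zero Ex_add)

lemma Ex_swap:
  assumes "(\<Sum>k\<le>m. D k) = 1"
  shows "i < n \<Longrightarrow> Exq D m n h = Exq D m n (\<lambda>\<kappa>. \<Sum>k\<le>m. D k * h (\<kappa>(i:=k)))"
proof (induction n arbitrary: h)
  case 0 then show ?case by simp
next
  case (Suc n)
  show ?case
  proof (cases "i = n")
    case True
    have "Exq D m (Suc n) (\<lambda>\<kappa>. \<Sum>k\<le>m. D k * h (\<kappa>(i:=k)))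
        = (\<Sum>kk\<le>m. D kk * Exq D m n (\<lambda>\<kappa>. \<Sum>k\<le>m. D k * h (\<kappa>(n:=k))))"
      using True by simp
    also have "\<dots> = Exq D m n (\<lambda>\<kappa>. \<Sum>k\<le>m. D k * h (\<kappa>(n:=k)))"
      using assms by (simp add: sum_distrib_right[symmetric])
    also have "\<dots> = Exq D m (Suc n) h"
      by (simp add: Ex_sum Ex_cmult)
    finally show ?thesis by (rule sym)
  next
    case False
    then have i: "i < n" using Suc.prems by simp
    have e: "Exq D m n (\<lambda>\<kappa>. h (\<kappa>(n:=kk))) = Exq D m n (\<lambda>\<kappa>. \<Sum>k\<le>m. D k * h (\<kappa>(i:=k, n:=kk)))" for kk
      using Suc.IH[OF i, of "\<lambda>\<kappa>. h (\<kappa>(n:=kk))"] .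
    have "Exq D m (Suc n) h = (\<Sum>kk\<le>m. D kk * Exq D m n (\<lambda>\<kappa>. \<Sum>k\<le>m. D k * h (\<kappa>(i:=k, n:=kk))))"
      by (simp only: Exq.simps e)
    also have "\<dots> = Exq D m (Suc n) (\<lambda>\<kappa>. \<Sum>k\<le>m. D k * h (\<kappa>(i:=k)))"
      using False by (simp add: fun_upd_twist)
    finally show ?thesis .
  qed
qed


definition Dg :: "nat \<Rightarrow> nat \<Rightarrow> real" where
  "Dg m k = (if k = 0 then exp (-1) else if k \<le> m then exp (real (k-1) / real m - 1) * (exp (1 / real m) - 1) else 0)"

definition sg :: "nat \<Rightarrow> nat \<Rightarrow> real" where
  "sg m k = 1 - exp (- (real k / real m))"

lemma Dg_nonneg: "Dg m k \<ge> 0"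
  unfolding Dg_def by (auto intro!: mult_nonneg_nonneg simp: one_le_exp_iff)

lemma Dg_F: assumes "m > 0" shows "k \<le> m \<Longrightarrow> (\<Sum>j\<le>k. Dg m j) = exp (real k / real m - 1)"
proof (induction k)
  case 0 then show ?case by (simp add: Dg_def)
next
  case (Suc k)
  have "(\<Sum>j\<le>Suc k. Dg m j) = exp (real k / real m - 1) + exp (real k / real m - 1) * (exp (1 / real m) - 1)"
    using Suc by (simp add: Dg_def)
  also have "\<dots> = exp (real k / real m - 1) * exp (1 / real m)" by (simp add: algebra_simps)
  also have "\<dots> = exp (real (Suc k) / real m - 1)"
    unfolding exp_add[symmetric] using assms by (simp add: field_simps)
  finally show ?case .
qed

lemma Dg_sum: "m > 0 \<Longrightarrow> (\<Sum>j\<le>m. Dg m j) = 1"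
  using Dg_F[of m m] by simp

lemma sg_0: "sg m 0 = 0" by (simp add: sg_def)

lemma sg_bounds: "m > 0 \<Longrightarrow> 0 \<le> sg m k \<and> sg m k < 1"
  unfolding sg_def by auto

lemma sg_mono: "m > 0 \<Longrightarrow> 1 \<le> k \<Longrightarrow> sg m 1 \<le> sg m k"
  unfolding sg_def by (simp add: divide_right_mono)

lemma sg_1_pos: "m > 0 \<Longrightarrow> sg m 1 > 0"
  unfolding sg_def by simp

lemma Dg_prod: assumes "m > 0" "1 \<le> k" "k \<le> m"
  shows "Dg m k * (1 - sg m k) = exp (-1) * (1 - exp (- 1 / real m))"
proof -
  obtain j where k: "k = Suc j" using assms(2) by (cases k) auto
  let ?a = "real j / real m - 1" and ?b = "1 / real m" and ?c = "- (real k / real m)"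
  have "Dg m k * (1 - sg m k) = exp ?a * (exp ?b - 1) * exp ?c"
    using assms k by (simp add: Dg_def sg_def)
  also have "\<dots> = exp ?a * exp ?b * exp ?c - exp ?a * exp ?c" by (simp add: algebra_simps)
  also have "\<dots> = exp (?a + ?b + ?c) - exp (?a + ?c)" by (simp only: exp_add)
  also have "?a + ?b + ?c = -1" using assms(1) by (simp add: k field_simps)
  also have "?a + ?c = -1 + (- 1 / real m)" using assms(1) by (simp add: k field_simps)
  also have "exp (-1) - exp (-1 + (- 1 / real m)) = exp (-1) * (1 - exp (- 1 / real m))"
    by (simp only: exp_add) (simp add: algebra_simps)
  finally show ?thesis .
qed

lemma Dg_rel: assumes "m > 0" "k < m"
  shows "Dg m (Suc k) = sg m (Suc k) * Dg m (Suc k) + (sg m (Suc k) - sg m k) * (\<Sum>j\<le>k. Dg m j)"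
proof -
  have a: "Dg m (Suc k) * (1 - sg m (Suc k)) = exp (-1) * (1 - exp (- 1 / real m))"
    using Dg_prod[of m "Suc k"] assms by simp
  let ?a = "- (real k / real m)" and ?b = "- (real (Suc k) / real m)" and ?c = "real k / real m - 1"
  have "(sg m (Suc k) - sg m k) * (\<Sum>j\<le>k. Dg m j) = (exp ?a - exp ?b) * exp ?c"
    using Dg_F[of m k] assms by (simp add: sg_def)
  also have "\<dots> = exp (?a + ?c) - exp (?b + ?c)"
    by (simp only: exp_add) (simp add: algebra_simps)
  also have "?a + ?c = -1" by simp
  also have "?b + ?c = -1 + (- 1 / real m)" using assms(1) by (simp add: field_simps)
  also have "exp (-1) - exp (-1 + (- 1 / real m)) = exp (-1) * (1 - exp (- 1 / real m))"
    by (simp only: exp_add) (simp add: algebra_simps)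
  finally show ?thesis using a by (simp add: algebra_simps)
qed

definition bg :: "nat \<Rightarrow> real" where "bg m = (\<Sum>k\<le>m. Dg m k * sg m k)"

lemma bg_pos: assumes "m > 0" shows "bg m > 0"
proof -
  have "Dg m m * sg m m \<le> bg m" unfolding bg_def
    using assms by (intro member_le_sum) (auto intro!: mult_nonneg_nonneg Dg_nonneg simp: sg_bounds)
  moreover have "Dg m m * sg m m > 0" using assms
    by (auto simp: Dg_def sg_def intro!: mult_pos_pos)
  ultimately show ?thesis by linarith
qed

lemma bg_le: assumes "m > 0" shows "bg m \<le> 1"
proof -
  have "bg m \<le> (\<Sum>k\<le>m. Dg m k)" unfolding bg_def
    using assms by (intro sum_mono) (auto intro!: mult_left_le Dg_nonneg simp: sg_bounds less_imp_le)
  then show ?thesis using Dg_sum[OF assms] by simp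
qed

lemma bg_bound: assumes "m > 0" shows "Dg m 0 + bg m \<le> 1 - exp (-1) + 1 / (real m + 1)"
proof -
  have "bg m = (\<Sum>k\<le>m. Dg m k) - (\<Sum>k\<le>m. Dg m k * (1 - sg m k))"
    unfolding bg_def by (simp add: sum_subtractf[symmetric] algebra_simps)
  also have "(\<Sum>k\<le>m. Dg m k * (1 - sg m k)) = Dg m 0 + (\<Sum>k<m. Dg m (Suc k) * (1 - sg m (Suc k)))"
    by (simp add: sum.atMost_shift sg_0)
  also have "(\<Sum>k<m. Dg m (Suc k) * (1 - sg m (Suc k))) = real m * (exp (-1) * (1 - exp (- 1 / real m)))"
    using Dg_prod[OF assms] by simp
  finally have b: "Dg m 0 + bg m = 1 - real m * (exp (-1) * (1 - exp (- 1 / real m)))"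
    using Dg_sum[OF assms] by simp
  have e1: "exp (1 / real m) \<ge> 1 + 1 / real m" by (rule exp_ge_add_one_self)
  have "exp (- 1 / real m) = 1 / exp (1 / real m)" by (simp add: exp_minus field_simps)
  also have "\<dots> \<le> 1 / (1 + 1 / real m)"
    using e1 assms by (intro divide_left_mono) (auto intro!: mult_pos_pos add_pos_pos)
  also have "\<dots> = real m / (real m + 1)" using assms by (simp add: field_simps)
  finally have e2: "exp (- 1 / real m) \<le> real m / (real m + 1)" .
  have "real m * (1 - exp (- 1 / real m)) \<ge> real m * (1 - real m / (real m + 1))"
    using e2 by (intro mult_left_mono) auto
  moreover have "real m * (1 - real m / (real m + 1)) = 1 - 1 / (real m + 1)"
    by (simp add: field_simps)
  ultimately have c: "real m * (1 - exp (- 1 / real m)) \<ge> 1 - 1 / (real m + 1)" by simp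
  have "exp (-1) * (1 - 1 / (real m + 1)) \<le> exp (-1) * (real m * (1 - exp (- 1 / real m)))"
    using c by (intro mult_left_mono) auto
  moreover have "exp (-1::real) \<le> 1" by simp
  moreover have "0 \<le> 1 / (real m + 1)" by simp
  moreover have "exp (-1) / (real m + 1) \<le> 1 / (real m + 1)"
    by (intro divide_right_mono) auto
  moreover have "exp (-1) * (1 - 1 / (real m + 1)) = exp (-1) - exp (-1) / (real m + 1)"
    by (simp add: algebra_simps)
  moreover have "exp (-1) * (real m * (1 - exp (- 1 / real m))) = real m * (exp (-1) * (1 - exp (- 1 / real m)))"
    by (simp add: algebra_simps)
  ultimately have "exp (-1) - 1 / (real m + 1) \<le> real m * (exp (-1) * (1 - exp (- 1 / real m)))"
    by linarith
  then show ?thesis using b by linarith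
qed


lemma sum_upd: "(\<Sum>i<Suc n. s ((\<kappa>(n:=k)) i)) = (\<Sum>i<n. s (\<kappa> i)) + (s k :: real)"
proof -
  have "(\<Sum>i<n. s ((\<kappa>(n:=k)) i)) = (\<Sum>i<n. s (\<kappa> i))" by (rule sum.cong) auto
  then show ?thesis by simp
qed

lemma Ex_var:
  assumes D1: "(\<Sum>k\<le>m. D k) = 1" and b: "b = (\<Sum>k\<le>m. D k * s k)"
  shows "Exq D m n (\<lambda>\<kappa>. (\<Sum>i<n. s (\<kappa> i)) - real n * b) = 0 \<and>
    Exq D m n (\<lambda>\<kappa>. ((\<Sum>i<n. s (\<kappa> i)) - real n * b)^2) = real n * (\<Sum>k\<le>m. D k * (s k - b)^2)"
proof (induction n)
  case 0 then show ?case by simp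
next
  case (Suc n)
  let ?Y = "\<lambda>\<kappa>. (\<Sum>i<n. s (\<kappa> i)) - real n * b"
  let ?V = "\<Sum>k\<le>m. D k * (s k - b)^2"
  have h: "(\<Sum>i<Suc n. s ((\<kappa>(n:=k)) i)) - real (Suc n) * b = ?Y \<kappa> + (s k - b)" for \<kappa> k
    by (simp add: sum_upd algebra_simps)
  have e1: "Exq D m n (\<lambda>\<kappa>. ?Y \<kappa> + (s k - b)) = s k - b" for k
    using Suc.IH D1 by (simp add: Ex_add Ex_const)
  have e2: "Exq D m n (\<lambda>\<kappa>. (?Y \<kappa> + (s k - b))^2) = real n * ?V + (s k - b)^2" for k
  proof -
    have "Exq D m n (\<lambda>\<kappa>. (?Y \<kappa> + (s k - b))^2) =
       Exq D m n (\<lambda>\<kappa>. (?Y \<kappa>)^2 + ((2 * (s k - b)) * ?Y \<kappa> + (s k - b)^2))"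
      by (simp add: power2_eq_square algebra_simps)
    also have "\<dots> = real n * ?V + (s k - b)^2"
      using Suc.IH D1 by (simp add: Ex_add Ex_cmult Ex_const)
    finally show ?thesis .
  qed
  have "Exq D m (Suc n) (\<lambda>\<kappa>. (\<Sum>i<Suc n. s (\<kappa> i)) - real (Suc n) * b) = (\<Sum>k\<le>m. D k * (s k - b))"
    by (simp only: Exq.simps h e1)
  also have "\<dots> = 0" using D1 b by (simp add: algebra_simps sum_subtractf sum_distrib_right[symmetric])
  finally have A: "Exq D m (Suc n) (\<lambda>\<kappa>. (\<Sum>i<Suc n. s (\<kappa> i)) - real (Suc n) * b) = 0" .
  have "Exq D m (Suc n) (\<lambda>\<kappa>. ((\<Sum>i<Suc n. s (\<kappa> i)) - real (Suc n) * b)^2) = (\<Sum>k\<le>m. D k * (real n * ?V + (s k - b)^2))"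
    by (simp only: Exq.simps h e2)
  also have "\<dots> = real n * ?V + ?V" using D1
    by (simp add: distrib_left sum.distrib sum_distrib_right[symmetric] mult.commute)
  finally show ?case using A by (simp add: algebra_simps)
qed


lemma opt_lower:
  fixes S :: "nat set" and c :: "nat \<Rightarrow> real"
  assumes fin: "finite S" and B: "B > 0" and sig: "\<sigma> > 0"
    and cs: "\<And>i. i \<in> S \<Longrightarrow> c i = 0 \<or> c i \<ge> \<sigma>"
  shows "opt_frac S (\<lambda>_. 1) B c \<ge> real (card S) - max 0 ((\<Sum>i\<in>S. c i) - B) / \<sigma>"
proof -
  define X where "X = (\<Sum>i\<in>S. c i)"
  have X0: "X \<ge> 0" unfolding X_def using cs sig by (intro sum_nonneg) force
  define t where "t = (if X \<le> B then 1 else B / X)"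
  have t: "0 \<le> t" "t \<le> 1" using X0 B by (auto simp: t_def)
  have tX: "t * X \<le> B" using X0 B by (auto simp: t_def)
  have mx: "(1 - t) * X = max 0 (X - B)" using X0 B by (auto simp: t_def field_simps)
  define a where "a i = (if c i = 0 then 1 else t)" for i
  let ?A = "{\<Sum>i\<in>S. 1 * a i | a. (\<forall>i\<in>S. 0 \<le> a i \<and> a i \<le> 1) \<and> (\<Sum>i\<in>S. c i * a i) \<le> B}"
  have feas: "(\<Sum>i\<in>S. c i * a i) \<le> B"
  proof -
    have "(\<Sum>i\<in>S. c i * a i) = (\<Sum>i\<in>S. t * c i)" by (rule sum.cong) (auto simp: a_def)
    also have "\<dots> = t * X" by (simp add: X_def sum_distrib_left)
    finally show ?thesis using tX by simp
  qed
  have mem: "(\<Sum>i\<in>S. 1 * a i) \<in> ?A" using feas t by (auto simp: a_def)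
  have bdd: "bdd_above ?A"
  proof (rule bdd_aboveI)
    fix y assume "y \<in> ?A"
    then obtain a' where y: "y = (\<Sum>i\<in>S. 1 * a' i)" and a': "\<forall>i\<in>S. 0 \<le> a' i \<and> a' i \<le> 1" by blast
    have "y \<le> (\<Sum>i\<in>S. 1)" unfolding y using a' by (intro sum_mono) auto
    then show "y \<le> real (card S)" by simp
  qed
  have val: "(\<Sum>i\<in>S. 1 * a i) \<ge> real (card S) - max 0 (X - B) / \<sigma>"
  proof -
    have "a i \<ge> 1 - (1 - t) * (c i / \<sigma>)" if "i \<in> S" for i
    proof (cases "c i = 0")
      case True then show ?thesis by (simp add: a_def)
    next
      case False
      then have "c i / \<sigma> \<ge> 1" using cs[OF that] sig by simp
      then have "(1 - t) * (c i / \<sigma>) \<ge> (1 - t) * 1" using t by (intro mult_left_mono) auto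
      then show ?thesis using False by (simp add: a_def)
    qed
    then have "(\<Sum>i\<in>S. 1 * a i) \<ge> (\<Sum>i\<in>S. 1 - (1 - t) * (c i / \<sigma>))" by (simp add: sum_mono)
    also have "(\<Sum>i\<in>S. 1 - (1 - t) * (c i / \<sigma>)) = real (card S) - (1 - t) * X / \<sigma>"
      by (simp add: sum_subtractf X_def sum_distrib_left sum_divide_distrib)
    finally show ?thesis using mx by simp
  qed
  have "(\<Sum>i\<in>S. 1 * a i) \<le> opt_frac S (\<lambda>_. 1) B c"
    unfolding opt_frac_def by (rule cSup_upper[OF mem bdd])
  then show ?thesis using val X_def by simp
qed


theorem corollary1:
  shows "\<not> (\<exists>(M :: mechanism) (\<alpha> :: real) (\<theta>\<^sub>0 :: real).
     well_formed M \<and> indiv_rational_exp M \<and> truthful_exp M \<and> budget_feasible_exp M \<and>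
     \<alpha> > 1 - 1 / exp 1 \<and> \<theta>\<^sub>0 > 0 \<and>
     (\<forall>S u B c. valid_instance S u B \<longrightarrow> valid_costs S c \<longrightarrow> Max (c ` S) / B \<le> \<theta>\<^sub>0 \<longrightarrow>
        exp_utility M S u B c \<ge> \<alpha> * opt_frac S u B c))"
proof
  assume "\<exists>(M :: mechanism) (\<alpha> :: real) (\<theta>\<^sub>0 :: real).
     well_formed M \<and> indiv_rational_exp M \<and> truthful_exp M \<and> budget_feasible_exp M \<and>
     \<alpha> > 1 - 1 / exp 1 \<and> \<theta>\<^sub>0 > 0 \<and>
     (\<forall>S u B c. valid_instance S u B \<longrightarrow> valid_costs S c \<longrightarrow> Max (c ` S) / B \<le> \<theta>\<^sub>0 \<longrightarrow>
        exp_utility M S u B c \<ge> \<alpha> * opt_frac S u B c)"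
  then obtain M :: mechanism and \<alpha> \<theta>0 :: real where
    wf: "well_formed M" and ir: "indiv_rational_exp M" and tr: "truthful_exp M"
    and bf: "budget_feasible_exp M" and al: "\<alpha> > 1 - 1 / exp 1" and th: "\<theta>0 > 0"
    and guar: "\<And>S u B c. valid_instance S u B \<Longrightarrow> valid_costs S c \<Longrightarrow> Max (c ` S) / B \<le> \<theta>0 \<Longrightarrow>
        exp_utility M S u B c \<ge> \<alpha> * opt_frac S u B c"
    by blast
  have ee: "1 / exp 1 = exp (-1::real)" by (simp add: exp_minus field_simps)
  define \<delta> where "\<delta> = \<alpha> - (1 - exp (-1))"
  have dpos: "\<delta> > 0" using al ee by (simp add: \<delta>_def)
  have e1: "exp (-1::real) < 1" by simp
  have apos: "\<alpha> > 0" using al ee e1 by linarith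
  define m where "m = nat \<lceil>2 / \<delta>\<rceil> + 1"
  have mpos: "m > 0" by (simp add: m_def)
  have m_real: "real m \<ge> 2 / \<delta>" unfolding m_def by linarith
  have m_small: "1 / (real m + 1) < \<delta> / 2"
  proof -
    have "2 / \<delta> < real m + 1" using m_real by simp
    then have "2 < (real m + 1) * \<delta>" using dpos by (simp add: field_simps)
    then show ?thesis using dpos by (simp add: field_simps)
  qed
  define D where "D = Dg m"
  define s where "s = sg m"
  define b where "b = bg m"
  define \<sigma> where "\<sigma> = s 1"
  have bpos: "b > 0" and ble: "b \<le> 1" using bg_pos[OF mpos] bg_le[OF mpos] by (simp_all add: b_def)
  have spos: "\<sigma> > 0" using sg_1_pos[OF mpos] by (simp add: \<sigma>_def s_def)
  have D0: "\<And>k. D k \<ge> 0" by (simp add: D_def Dg_nonneg)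
  have D1: "(\<Sum>k\<le>m. D k) = 1" by (simp add: D_def Dg_sum[OF mpos])
  have sb: "\<And>k. 0 \<le> s k \<and> s k < 1" by (simp add: s_def sg_bounds[OF mpos])
  define \<eta> where "\<eta> = \<delta> * \<sigma> / (8 * \<alpha>)"
  have etapos: "\<eta> > 0" using dpos spos apos by (simp add: \<eta>_def)
  define n where "n = nat \<lceil>max (\<alpha> / (4 * \<eta> * \<sigma>) * 8 / \<delta>) (1 / (b * \<theta>0))\<rceil> + 1"
  have npos: "n > 0" by (simp add: n_def)
  have n1: "real n \<ge> \<alpha> / (4 * \<eta> * \<sigma>) * 8 / \<delta>" unfolding n_def by linarith
  have n2: "real n \<ge> 1 / (b * \<theta>0)" unfolding n_def by linarith
  define S where "S = {..<n}"
  define u :: "nat \<Rightarrow> real" where "u = (\<lambda>_. 1)"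
  define B where "B = real n * b"
  have Bpos: "B > 0" using npos bpos by (simp add: B_def)
  have finS: "finite S" by (simp add: S_def)
  have cardS: "card S = n" by (simp add: S_def)
  have vi: "valid_instance S u B" using npos Bpos by (auto simp: valid_instance_def S_def u_def)
  define c where "c \<kappa> = (\<lambda>j. s (\<kappa> j))" for \<kappa> :: "nat \<Rightarrow> nat"
  have vc: "valid_costs S (c \<kappa>)" for \<kappa> using sb by (simp add: valid_costs_def c_def)
  have maxc: "Max (c \<kappa> ` S) / B \<le> \<theta>0" for \<kappa>
  proof -
    have ne: "c \<kappa> ` S \<noteq> {}" using npos by (auto simp: S_def)
    have "Max (c \<kappa> ` S) \<le> 1"
      unfolding Max_le_iff[OF finite_imageI[OF finS] ne] using sb by (auto simp: c_def less_imp_le)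
    moreover have "1 / B \<le> \<theta>0"
    proof -
      have "1 \<le> real n * (b * \<theta>0)" using n2 bpos th by (simp add: field_simps)
      then show ?thesis using Bpos th by (simp add: B_def field_simps)
    qed
    ultimately show ?thesis using Bpos
      by (meson divide_right_mono less_imp_le order_trans)
  qed
  define X where "X \<kappa> i = exp_x (M S u B (c \<kappa>)) i" for \<kappa> i
  define P where "P \<kappa> i = exp_p (M S u B (c \<kappa>)) i" for \<kappa> i
  define Z where "Z \<kappa> = (\<Sum>i<n. s (\<kappa> i)) - real n * b" for \<kappa> :: "nat \<Rightarrow> nat"
  define V where "V = (\<Sum>k\<le>m. D k * (s k - b)^2)"
  have Vle: "V \<le> 1"
  proof -
    have "V \<le> (\<Sum>k\<le>m. D k * 1)" unfolding V_def
    proof (rule sum_mono)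
      fix k assume "k \<in> {..m}"
      have "\<bar>s k - b\<bar> \<le> 1" using sb[of k] bpos ble by (simp add: abs_le_iff)
      then have "(s k - b)^2 \<le> 1" by (simp add: abs_square_le_1)
      then show "D k * (s k - b)^2 \<le> D k * 1" using D0 by (intro mult_left_mono) auto
    qed
    then show ?thesis using D1 by simp
  qed
  have var: "Exq D m n Z = 0 \<and> Exq D m n (\<lambda>\<kappa>. (Z \<kappa>)^2) = real n * V"
    unfolding Z_def V_def by (rule Ex_var[OF D1]) (simp add: b_def bg_def D_def s_def)
  define \<epsilon> where "\<epsilon> = real n * \<eta>"
  have epos: "\<epsilon> > 0" using npos etapos by (simp add: \<epsilon>_def)
  have maxZ: "max 0 (Z \<kappa>) \<le> (Z \<kappa>)^2 / (4 * \<epsilon>) + \<epsilon>" for \<kappa>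
  proof -
    have "0 \<le> (Z \<kappa> - 2 * \<epsilon>)^2" by simp
    then have "4 * \<epsilon> * Z \<kappa> \<le> (Z \<kappa>)^2 + 4 * \<epsilon> * \<epsilon>" by (simp add: power2_eq_square algebra_simps)
    then have "Z \<kappa> \<le> (Z \<kappa>)^2 / (4 * \<epsilon>) + \<epsilon>" using epos by (simp add: field_simps)
    moreover have "0 \<le> (Z \<kappa>)^2 / (4 * \<epsilon>) + \<epsilon>" using epos by simp
    ultimately show ?thesis by simp
  qed
  have EmaxZ: "Exq D m n (\<lambda>\<kappa>. max 0 (Z \<kappa>)) \<le> 1 / (4 * \<eta>) + real n * \<eta>"
  proof -
    have "Exq D m n (\<lambda>\<kappa>. max 0 (Z \<kappa>)) \<le> Exq D m n (\<lambda>\<kappa>. (1 / (4 * \<epsilon>)) * (Z \<kappa>)^2 + \<epsilon>)"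
      using maxZ by (intro Ex_mono[OF D0]) simp
    also have "\<dots> = (1 / (4 * \<epsilon>)) * Exq D m n (\<lambda>\<kappa>. (Z \<kappa>)^2) + \<epsilon>"
      by (simp only: Ex_add Ex_cmult Ex_const[OF D1])
    also have "\<dots> = real n * V / (4 * \<epsilon>) + \<epsilon>" using var by simp
    also have "\<dots> \<le> real n / (4 * \<epsilon>) + \<epsilon>" using Vle npos epos by (simp add: divide_right_mono mult_left_le)
    also have "\<dots> = 1 / (4 * \<eta>) + real n * \<eta>" using npos by (simp add: \<epsilon>_def)
    finally show ?thesis .
  qed
  have pt: "(\<Sum>i<n. X \<kappa> i) \<ge> \<alpha> * (real n - max 0 (Z \<kappa>) / \<sigma>)" for \<kappa>
  proof -
    have "exp_utility M S u B (c \<kappa>) \<ge> \<alpha> * opt_frac S u B (c \<kappa>)"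
      by (rule guar[OF vi vc maxc])
    moreover have "exp_utility M S u B (c \<kappa>) = (\<Sum>i<n. X \<kappa> i)"
      using util_eq[OF wf vi vc] by (simp add: X_def u_def S_def)
    moreover have "opt_frac S u B (c \<kappa>) \<ge> real n - max 0 (Z \<kappa>) / \<sigma>"
    proof -
      have cs: "c \<kappa> i = 0 \<or> c \<kappa> i \<ge> \<sigma>" for i
      proof (cases "\<kappa> i = 0")
        case True then show ?thesis by (simp add: c_def s_def sg_0)
      next
        case False then show ?thesis using sg_mono[OF mpos, of "\<kappa> i"] by (simp add: c_def s_def \<sigma>_def)
      qed
      have "(\<Sum>i\<in>S. c \<kappa> i) - B = Z \<kappa>" by (simp add: S_def c_def Z_def B_def)
      then show ?thesis using opt_lower[OF finS Bpos spos, of "c \<kappa>"] cs cardS by (simp add: u_def)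
    qed
    ultimately show ?thesis using apos
      by (metis less_imp_le mult_left_mono order_trans)
  qed
  have lower: "Exq D m n (\<lambda>\<kappa>. \<Sum>i<n. X \<kappa> i) \<ge> \<alpha> * (real n - (1 / (4 * \<eta>) + real n * \<eta>) / \<sigma>)"
  proof -
    have "Exq D m n (\<lambda>\<kappa>. \<Sum>i<n. X \<kappa> i) \<ge> Exq D m n (\<lambda>\<kappa>. \<alpha> * real n - (\<alpha> / \<sigma>) * max 0 (Z \<kappa>))"
      using pt by (intro Ex_mono[OF D0]) (simp add: algebra_simps)
    also have "Exq D m n (\<lambda>\<kappa>. \<alpha> * real n - (\<alpha> / \<sigma>) * max 0 (Z \<kappa>)) =
        \<alpha> * real n - (\<alpha> / \<sigma>) * Exq D m n (\<lambda>\<kappa>. max 0 (Z \<kappa>))"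
      by (simp only: Ex_diff Ex_cmult Ex_const[OF D1])
    also have "\<dots> \<ge> \<alpha> * real n - (\<alpha> / \<sigma>) * (1 / (4 * \<eta>) + real n * \<eta>)"
    proof -
      have "0 \<le> \<alpha> / \<sigma>" using apos spos by simp
      then have "(\<alpha> / \<sigma>) * Exq D m n (\<lambda>\<kappa>. max 0 (Z \<kappa>)) \<le> (\<alpha> / \<sigma>) * (1 / (4 * \<eta>) + real n * \<eta>)"
        using EmaxZ by (rule mult_left_mono[rotated])
      then show ?thesis by linarith
    qed
    finally have fin: "Exq D m n (\<lambda>\<kappa>. \<Sum>i<n. X \<kappa> i) \<ge> \<alpha> * real n - (\<alpha> / \<sigma>) * (1 / (4 * \<eta>) + real n * \<eta>)" .
    have "\<alpha> * (real n - (1 / (4 * \<eta>) + real n * \<eta>) / \<sigma>) = \<alpha> * real n - (\<alpha> / \<sigma>) * (1 / (4 * \<eta>) + real n * \<eta>)"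
      by (simp add: diff_divide_distrib right_diff_distrib)
    then show ?thesis using fin by linarith
  qed
  have perseller: "Exq D m n (\<lambda>\<kappa>. X \<kappa> i) \<le> Exq D m n (\<lambda>\<kappa>. P \<kappa> i) + D 0" if iS: "i < n" for i
  proof -
    have iS': "i \<in> S" using iS by (simp add: S_def)
    have my: "(\<Sum>k\<le>m. D k * P (\<kappa>(i:=k)) i) \<ge> (\<Sum>k\<le>m. D k * X (\<kappa>(i:=k)) i) - D 0" for \<kappa>
    proof (rule myerson[OF D0])
      fix k assume km: "k < m"
      have cu: "(c (\<kappa>(i:=k)))(i := s (Suc k)) = c (\<kappa>(i:=Suc k))" by (auto simp: c_def)
      have ci: "c (\<kappa>(i:=k)) i = s k" by (simp add: c_def)
      show "P (\<kappa>(i:=k)) i - s k * X (\<kappa>(i:=k)) i \<ge> P (\<kappa>(i:=Suc k)) i - s k * X (\<kappa>(i:=Suc k)) i"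
        using truth[OF wf bf tr vi vc[of "\<kappa>(i:=k)"] iS', of "s (Suc k)"] sb[of "Suc k"]
        unfolding cu ci by (simp add: P_def X_def)
    next
      show "P (\<kappa>(i:=m)) i - s m * X (\<kappa>(i:=m)) i \<ge> 0"
        using ir vi vc[of "\<kappa>(i:=m)"] iS' unfolding indiv_rational_exp_def
        by (force simp: P_def X_def c_def)
    next
      fix k assume "k < m"
      then show "D (Suc k) = s (Suc k) * D (Suc k) + (s (Suc k) - s k) * (\<Sum>j\<le>k. D j)"
        using Dg_rel[OF mpos] by (simp add: D_def s_def)
    next
      show "s 0 = 0" by (simp add: s_def sg_0)
    next
      show "X (\<kappa>(i:=0)) i \<le> 1" using wf_x(2)[OF wf vi vc iS'] by (simp add: X_def)
    qed
    have "Exq D m n (\<lambda>\<kappa>. X \<kappa> i) = Exq D m n (\<lambda>\<kappa>. \<Sum>k\<le>m. D k * X (\<kappa>(i:=k)) i)"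
      by (rule Ex_swap[OF D1 iS])
    also have "\<dots> \<le> Exq D m n (\<lambda>\<kappa>. (\<Sum>k\<le>m. D k * P (\<kappa>(i:=k)) i) + D 0)"
      using my by (intro Ex_mono[OF D0]) (simp add: algebra_simps)
    also have "\<dots> = Exq D m n (\<lambda>\<kappa>. P \<kappa> i) + D 0"
      using D1 Ex_swap[OF D1 iS, of "\<lambda>\<kappa>. P \<kappa> i"] by (simp add: Ex_add Ex_const)
    finally show ?thesis .
  qed
  have upper: "Exq D m n (\<lambda>\<kappa>. \<Sum>i<n. X \<kappa> i) \<le> real n * (D 0 + b)"
  proof -
    have "Exq D m n (\<lambda>\<kappa>. \<Sum>i<n. X \<kappa> i) = (\<Sum>i<n. Exq D m n (\<lambda>\<kappa>. X \<kappa> i))"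
      by (simp add: Ex_sum)
    also have "\<dots> \<le> (\<Sum>i<n. Exq D m n (\<lambda>\<kappa>. P \<kappa> i) + D 0)"
      using perseller by (intro sum_mono) simp
    also have "\<dots> = Exq D m n (\<lambda>\<kappa>. \<Sum>i<n. P \<kappa> i) + real n * D 0"
      by (simp add: Ex_sum sum.distrib)
    also have "Exq D m n (\<lambda>\<kappa>. \<Sum>i<n. P \<kappa> i) \<le> Exq D m n (\<lambda>\<kappa>. B)"
    proof (rule Ex_mono[OF D0])
      fix \<kappa>
      have "(\<Sum>j\<in>S. exp_p (M S u B (c \<kappa>)) j) \<le> B"
        using wf_p(3)[OF wf bf vi vc, of 0] npos by (simp add: S_def)
      then show "(\<Sum>i<n. P \<kappa> i) \<le> B" by (simp add: P_def S_def)
    qed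
    also have "Exq D m n (\<lambda>\<kappa>. B) = B" using D1 by (simp add: Ex_const)
    finally show ?thesis by (simp add: B_def algebra_simps)
  qed
  have bb: "D 0 + b \<le> 1 - exp (-1) + 1 / (real m + 1)"
    using bg_bound[OF mpos] by (simp add: D_def b_def)
  have c1: "\<alpha> / (4 * \<eta> * \<sigma>) \<le> real n * \<delta> / 8"
  proof -
    let ?q = "\<alpha> / (4 * \<eta> * \<sigma>)"
    have "?q * 8 / \<delta> * (\<delta> / 8) \<le> real n * (\<delta> / 8)"
      using n1 dpos by (intro mult_right_mono) auto
    moreover have "?q * 8 / \<delta> * (\<delta> / 8) = ?q" using dpos by simp
    ultimately show ?thesis by simp
  qed
  have c2: "\<alpha> * \<eta> / \<sigma> = \<delta> / 8"
    using apos spos by (simp add: \<eta>_def field_simps)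
  have "\<alpha> * (real n - (1 / (4 * \<eta>) + real n * \<eta>) / \<sigma>)
      = \<alpha> * real n - \<alpha> / (4 * \<eta> * \<sigma>) - real n * (\<alpha> * \<eta> / \<sigma>)"
    using etapos spos by (simp add: field_simps)
  also have "\<dots> \<ge> \<alpha> * real n - real n * \<delta> / 4"
  proof -
    have f1: "real n * (\<alpha> * \<eta> / \<sigma>) = real n * \<delta> / 8" unfolding c2 by simp
    have f2: "real n * \<delta> / 4 = real n * \<delta> / 8 + real n * \<delta> / 8" by simp
    have gen: "\<And>a A Bq C W :: real. Bq = C \<Longrightarrow> W = C + C \<Longrightarrow> A \<le> C \<Longrightarrow> a - W \<le> a - A - Bq"
      by linarith
    show ?thesis by (rule gen[OF f1 f2 c1])
  qed
  finally have L: "\<alpha> * real n - real n * \<delta> / 4 \<le> real n * (D 0 + b)"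
    using lower upper by linarith
  have "real n * (D 0 + b) \<le> real n * (1 - exp (-1) + 1 / (real m + 1))"
    using bb by (intro mult_left_mono) auto
  also have "\<dots> < real n * (\<alpha> - \<delta> / 2)"
  proof -
    have "\<alpha> - \<delta> / 2 = (1 - exp (-1)) + \<delta> / 2" unfolding \<delta>_def by (simp add: field_simps)
    then have "1 - exp (-1) + 1 / (real m + 1) < \<alpha> - \<delta> / 2" using m_small by linarith
    then show ?thesis using npos by (intro mult_strict_left_mono) auto
  qed
  finally have "\<alpha> * real n - real n * \<delta> / 4 < real n * (\<alpha> - \<delta> / 2)" using L by linarith
  then have "real n * (\<delta> / 4) < 0" by (simp add: algebra_simps)
  then show False using npos dpos by (simp add: mult_less_0_iff)
qed

end
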